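(* Let $\Gamma$ be a set with weight function $w:\Gamma\to(0,\infty)$, and let $1<p<\infty$, $p\neq2$. Then there is no embedding (isomorphism onto a subspace) of $\ell^2$ into $m^{p,\infty}(\Gamma,w)$.
   Context: With $\mu(\sigma)=\sum_{\gamma\in\sigma}w(\gamma)$ on $\mathcal P(\Gamma)$, $\ell^{p,\infty}(\Gamma,w)$ is the space of functions $f$ on $\Gamma$ with $\|f\|=\sup_{c>0}c\,(\mu\{|f|>c\})^{1/p}<\infty$ (a Banach space under an equivalent norm), and $m^{p,\infty}(\Gamma,w)$ is its closed subspace generated by the characteristic functions of sets of finite $\mu$-measure. *)

theory Defs
  imports "HOL-Analysis.Analysis"
begin

definition wmeasure :: "('a \<Rightarrow> real) \<Rightarrow> 'a set \<Rightarrow> ennreal" where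
  "wmeasure w S = (SUP F\<in>{F. finite F \<and> F \<subseteq> S}. ennreal (sum w F))"

definition scaled_root :: "real \<Rightarrow> real \<Rightarrow> ennreal \<Rightarrow> ennreal" where
  "scaled_root p c t = (if t = \<infinity> then \<infinity> else ennreal (c * (enn2real t) powr (1 / p)))"

definition wlnorm :: "real \<Rightarrow> ('a \<Rightarrow> real) \<Rightarrow> ('a \<Rightarrow> real) \<Rightarrow> ennreal" where
  "wlnorm p w f = (SUP c\<in>{0<..}. scaled_root p c (wmeasure w {\<gamma>. \<bar>f \<gamma>\<bar> > c}))"

definition lpinf :: "real \<Rightarrow> ('a \<Rightarrow> real) \<Rightarrow> ('a \<Rightarrow> real) set" where
  "lpinf p w = {f. wlnorm p w f < \<infinity>}"

definition simple_fin :: "('a \<Rightarrow> real) \<Rightarrow> ('a \<Rightarrow> real) set" where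
  "simple_fin w = {g. \<exists>n (c::nat \<Rightarrow> real) (A::nat \<Rightarrow> 'a set).
      (\<forall>i<n. wmeasure w (A i) < \<infinity>) \<and> g = (\<lambda>\<gamma>. \<Sum>i<n. c i * indicator (A i) \<gamma>)}"

text \<open>m^{p,infinity}: the closure in lpinf of the span of those characteristic functions.\<close>
definition mpinf :: "real \<Rightarrow> ('a \<Rightarrow> real) \<Rightarrow> ('a \<Rightarrow> real) set" where
  "mpinf p w = {f \<in> lpinf p w. \<forall>e>0. \<exists>g\<in>simple_fin w. wlnorm p w (\<lambda>\<gamma>. f \<gamma> - g \<gamma>) < ennreal e}"

definition l2seq :: "(nat \<Rightarrow> real) set" where
  "l2seq = {x. summable (\<lambda>n. (x n)\<^sup>2)}"

definition l2norm :: "(nat \<Rightarrow> real) \<Rightarrow> real" where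
  "l2norm x = sqrt (\<Sum>n. (x n)\<^sup>2)"

end

theory Submission
  imports Defs
begin

context
  fixes w :: "'a \<Rightarrow> real" and p :: real
  assumes wpos: "\<And>\<gamma>. w \<gamma> > 0" and p1: "1 < p"
begin

lemma wm_mono: "S \<subseteq> T \<Longrightarrow> wmeasure w S \<le> wmeasure w T"
  unfolding wmeasure_def by (rule SUP_subset_mono) auto

lemma wm_finite: assumes "finite F" shows "wmeasure w F = ennreal (sum w F)"
  unfolding wmeasure_def
proof (rule antisym)
  show "(SUP G\<in>{G. finite G \<and> G \<subseteq> F}. ennreal (sum w G)) \<le> ennreal (sum w F)"
    by (rule SUP_least) (auto intro!: ennreal_leI sum_mono2 assms less_imp_le[OF wpos])
  show "ennreal (sum w F) \<le> (SUP G\<in>{G. finite G \<and> G \<subseteq> F}. ennreal (sum w G))"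
    by (rule SUP_upper) (use assms in auto)
qed

lemma wm_single: "w \<gamma> \<le> enn2real (wmeasure w {\<gamma>})" "wmeasure w {\<gamma>} = ennreal (w \<gamma>)"
  using wm_finite[of "{\<gamma>}"] wpos[of \<gamma>] by auto

lemma wm_Un: "wmeasure w (S \<union> T) \<le> wmeasure w S + wmeasure w T"
  unfolding wmeasure_def
proof (rule SUP_least)
  fix F assume F: "F \<in> {F. finite F \<and> F \<subseteq> S \<union> T}"
  have "sum w F \<le> sum w (F \<inter> S) + sum w (F - S)"
    using F by (simp add: sum.Int_Diff[of F w S])
  hence "ennreal (sum w F) \<le> ennreal (sum w (F \<inter> S)) + ennreal (sum w (F - S))"
    by (metis ennreal_leI ennreal_plus less_imp_le sum_nonneg wpos)
  also have "\<dots> \<le> (SUP F\<in>{F. finite F \<and> F \<subseteq> S}. ennreal (sum w F)) + (SUP F\<in>{F. finite F \<and> F \<subseteq> T}. ennreal (sum w F))"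
    by (intro add_mono SUP_upper) (use F in auto)
  finally show "ennreal (sum w F) \<le> (SUP F\<in>{F. finite F \<and> F \<subseteq> S}. ennreal (sum w F)) + (SUP F\<in>{F. finite F \<and> F \<subseteq> T}. ennreal (sum w F))" .
qed

lemma wm_UN: "finite I \<Longrightarrow> wmeasure w (\<Union>i\<in>I. X i) \<le> (\<Sum>i\<in>I. wmeasure w (X i))"
proof (induction I rule: finite_induct)
  case empty then show ?case by (simp add: wm_finite)
next
  case (insert i I)
  have "wmeasure w (\<Union>i\<in>insert i I. X i) \<le> wmeasure w (X i) + wmeasure w (\<Union>i\<in>I. X i)"
    using wm_Un by simp
  also have "\<dots> \<le> wmeasure w (X i) + (\<Sum>i\<in>I. wmeasure w (X i))" using insert by (simp add: add_left_mono)
  finally show ?case using insert by simp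
qed

lemma wm_approx:
  assumes fin: "wmeasure w E < \<infinity>" and d: "d > 0"
  shows "\<exists>F. finite F \<and> F \<subseteq> E \<and> wmeasure w (E - F) \<le> ennreal d"
proof (cases "wmeasure w E \<le> ennreal d")
  case True thus ?thesis by (intro exI[of _ "{}"]) auto
next
  case False
  let ?m = "enn2real (wmeasure w E)"
  have mE: "wmeasure w E = ennreal ?m" using fin by simp
  have md: "d < ?m" using False mE by (metis ennreal_leI not_le_imp_less)
  have "ennreal (?m - d) < wmeasure w E"
    using md d by (subst mE) (intro ennreal_lessI; simp)
  then obtain F where F: "finite F" "F \<subseteq> E" "ennreal (?m - d) < ennreal (sum w F)"
    unfolding wmeasure_def by (subst (asm) less_SUP_iff) auto
  have sF: "?m - d < sum w F" using F(3) md by (subst (asm) ennreal_less_iff) auto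
  have "wmeasure w (E - F) \<le> ennreal d"
    unfolding wmeasure_def
  proof (rule SUP_least)
    fix G assume G: "G \<in> {G. finite G \<and> G \<subseteq> E - F}"
    have "ennreal (sum w (G \<union> F)) \<le> wmeasure w E"
      unfolding wmeasure_def by (rule SUP_upper) (use G F in auto)
    hence "sum w (G \<union> F) \<le> ?m" using mE
      by (simp add: ennreal_le_iff[symmetric])
    moreover have "sum w (G \<union> F) = sum w G + sum w F"
      using G F by (intro sum.union_disjoint) auto
    ultimately show "ennreal (sum w G) \<le> ennreal d" using sF by (intro ennreal_leI) linarith
  qed
  thus ?thesis using F by blast
qed


lemma p0: "p > 0" using p1 by simp

lemma sr_le:
  assumes c: "c > 0" and M: "M \<ge> 0"
  shows "scaled_root p c t \<le> ennreal M \<longleftrightarrow> t \<le> ennreal ((M / c) powr p)"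
proof
  assume h: "scaled_root p c t \<le> ennreal M"
  have tf: "t \<noteq> \<infinity>"
  proof
    assume "t = \<infinity>"
    hence "(\<infinity>::ennreal) \<le> ennreal M" using h by (simp add: scaled_root_def)
    thus False by (simp add: top_unique)
  qed
  hence "ennreal (c * enn2real t powr (1 / p)) \<le> ennreal M" using h unfolding scaled_root_def by auto
  hence "c * enn2real t powr (1 / p) \<le> M" using M by (simp add: ennreal_le_iff)
  hence "enn2real t powr (1 / p) \<le> M / c" using c by (simp add: field_simps)
  hence "(enn2real t powr (1 / p)) powr p \<le> (M / c) powr p"
    using p0 by (intro powr_mono2) auto
  hence "enn2real t \<le> (M / c) powr p" using p0 by (simp add: powr_powr)
  moreover have "t = ennreal (enn2real t)" using tf by (simp add: less_top)
  ultimately show "t \<le> ennreal ((M / c) powr p)" using ennreal_leI by metis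
next
  assume h: "t \<le> ennreal ((M / c) powr p)"
  hence tf: "t \<noteq> \<infinity>" by (auto simp: top_unique)
  have "enn2real t \<le> (M / c) powr p" using h by (simp add: enn2real_leI)
  hence "enn2real t powr (1/p) \<le> ((M / c) powr p) powr (1/p)"
    using p0 by (intro powr_mono2) auto
  hence "enn2real t powr (1/p) \<le> M / c" using p0 M c by (simp add: powr_powr)
  hence "c * enn2real t powr (1/p) \<le> M" using c by (simp add: field_simps)
  thus "scaled_root p c t \<le> ennreal M" using tf unfolding scaled_root_def by (simp add: ennreal_leI)
qed

lemma N_le_iff:
  assumes M: "M \<ge> 0"
  shows "wlnorm p w f \<le> ennreal M \<longleftrightarrow> (\<forall>c>0. wmeasure w {\<gamma>. \<bar>f \<gamma>\<bar> > c} \<le> ennreal ((M / c) powr p))"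
proof -
  have "wlnorm p w f \<le> ennreal M \<longleftrightarrow> (\<forall>c\<in>{0<..}. scaled_root p c (wmeasure w {\<gamma>. \<bar>f \<gamma>\<bar> > c}) \<le> ennreal M)"
    unfolding wlnorm_def by (rule SUP_le_iff)
  also have "\<dots> \<longleftrightarrow> (\<forall>c>0. wmeasure w {\<gamma>. \<bar>f \<gamma>\<bar> > c} \<le> ennreal ((M / c) powr p))"
    using sr_le[OF _ M] by auto
  finally show ?thesis .
qed

lemma N_leI:
  assumes M: "M \<ge> 0" and "\<And>c. c > 0 \<Longrightarrow> wmeasure w {\<gamma>. \<bar>f \<gamma>\<bar> > c} \<le> ennreal ((M / c) powr p)"
  shows "wlnorm p w f \<le> ennreal M"
  using N_le_iff[OF M] assms(2) by blast

lemma N_leD: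
  assumes M: "M \<ge> 0" and "wlnorm p w f \<le> ennreal M" and "c > 0"
  shows "wmeasure w {\<gamma>. \<bar>f \<gamma>\<bar> > c} \<le> ennreal ((M / c) powr p)"
  using N_le_iff[OF M] assms(2,3) by blast

lemma sr_mono: assumes "c > 0" "t \<le> t'" shows "scaled_root p c t \<le> scaled_root p c t'"
proof (cases "t' = \<infinity>")
  case True thus ?thesis unfolding scaled_root_def by simp
next
  case False
  hence tf: "t \<noteq> \<infinity>" using assms(2) by (metis infinity_ennreal_def neq_top_trans)
  have "enn2real t \<le> enn2real t'" using assms(2) False by (simp add: enn2real_mono top.not_eq_extremum)
  hence "enn2real t powr (1/p) \<le> enn2real t' powr (1/p)" using p0 by (intro powr_mono2) auto
  hence "c * enn2real t powr (1/p) \<le> c * enn2real t' powr (1/p)" using assms(1) by simp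
  thus ?thesis using False tf unfolding scaled_root_def by (simp add: ennreal_leI)
qed

lemma N_mono: assumes "\<And>\<gamma>. \<bar>f \<gamma>\<bar> \<le> \<bar>g \<gamma>\<bar>" shows "wlnorm p w f \<le> wlnorm p w g"
  unfolding wlnorm_def
proof (rule SUP_mono)
  fix c :: real assume c: "c \<in> {0<..}"
  have "{\<gamma>. \<bar>f \<gamma>\<bar> > c} \<subseteq> {\<gamma>. \<bar>g \<gamma>\<bar> > c}" using assms by (auto intro: less_le_trans)
  hence "scaled_root p c (wmeasure w {\<gamma>. \<bar>f \<gamma>\<bar> > c}) \<le> scaled_root p c (wmeasure w {\<gamma>. \<bar>g \<gamma>\<bar> > c})"
    using c by (intro sr_mono wm_mono) auto
  thus "\<exists>c'\<in>{0<..}. scaled_root p c (wmeasure w {\<gamma>. \<bar>f \<gamma>\<bar> > c}) \<le> scaled_root p c' (wmeasure w {\<gamma>. \<bar>g \<gamma>\<bar> > c'})"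
    using c by blast
qed

lemma powr_add_le:
  fixes x y :: real assumes "x \<ge> 0" "y \<ge> 0" "q \<ge> 1"
  shows "x powr q + y powr q \<le> (x + y) powr q"
proof (cases "x + y = 0")
  case True hence "x = 0" "y = 0" using assms by auto
  thus ?thesis using assms by simp
next
  case False
  hence s: "x + y > 0" using assms by simp
  have "x powr q = x * x powr (q - 1)" using assms
    by (cases "x = 0") (auto simp: powr_diff)
  also have "\<dots> \<le> x * (x + y) powr (q - 1)" using assms by (intro mult_left_mono powr_mono2) auto
  finally have a: "x powr q \<le> x * (x + y) powr (q - 1)" .
  have "y powr q = y * y powr (q - 1)" using assms
    by (cases "y = 0") (auto simp: powr_diff)
  also have "\<dots> \<le> y * (x + y) powr (q - 1)" using assms by (intro mult_left_mono powr_mono2) auto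
  finally have b: "y powr q \<le> y * (x + y) powr (q - 1)" .
  have "x * (x + y) powr (q - 1) + y * (x + y) powr (q - 1) = (x + y) powr q"
    using s by (simp add: powr_diff add_divide_distrib[symmetric] distrib_right[symmetric])
  thus ?thesis using a b by linarith
qed

lemma N_tri:
  assumes pt: "\<And>\<gamma>. \<bar>f \<gamma>\<bar> \<le> \<bar>g \<gamma>\<bar> + \<bar>k \<gamma>\<bar>"
    and g: "wlnorm p w g \<le> ennreal a" and k: "wlnorm p w k \<le> ennreal b" and a: "a \<ge> 0" and b: "b \<ge> 0"
  shows "wlnorm p w f \<le> ennreal (2 * (a + b))"
proof (rule N_leI)
  show "0 \<le> 2 * (a + b)" using a b by simp
  fix c :: real assume c: "c > 0"
  have "{\<gamma>. \<bar>f \<gamma>\<bar> > c} \<subseteq> {\<gamma>. \<bar>g \<gamma>\<bar> > c/2} \<union> {\<gamma>. \<bar>k \<gamma>\<bar> > c/2}"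
  proof
    fix \<gamma> assume "\<gamma> \<in> {\<gamma>. \<bar>f \<gamma>\<bar> > c}"
    hence "c < \<bar>g \<gamma>\<bar> + \<bar>k \<gamma>\<bar>" using pt[of \<gamma>] by auto
    thus "\<gamma> \<in> {\<gamma>. \<bar>g \<gamma>\<bar> > c/2} \<union> {\<gamma>. \<bar>k \<gamma>\<bar> > c/2}" by auto
  qed
  hence "wmeasure w {\<gamma>. \<bar>f \<gamma>\<bar> > c} \<le> wmeasure w {\<gamma>. \<bar>g \<gamma>\<bar> > c/2} + wmeasure w {\<gamma>. \<bar>k \<gamma>\<bar> > c/2}"
    by (meson order_trans wm_Un wm_mono)
  also have "\<dots> \<le> ennreal ((a / (c/2)) powr p) + ennreal ((b / (c/2)) powr p)"
    using c by (intro add_mono N_leD[OF a g] N_leD[OF b k]) auto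
  also have "\<dots> = ennreal ((a / (c/2)) powr p + (b / (c/2)) powr p)"
    by (simp add: ennreal_plus)
  also have "\<dots> \<le> ennreal ((a / (c/2) + b / (c/2)) powr p)"
    using a b c p1 by (intro ennreal_leI powr_add_le) auto
  also have "a / (c/2) + b / (c/2) = 2 * (a + b) / c" using c by (simp add: field_simps)
  finally show "wmeasure w {\<gamma>. \<bar>f \<gamma>\<bar> > c} \<le> ennreal ((2 * (a + b) / c) powr p)" .
qed

lemma N_point:
  assumes M: "M \<ge> 0" and h: "wlnorm p w f \<le> ennreal M"
  shows "\<bar>f \<gamma>\<bar> \<le> M * w \<gamma> powr (-1/p)"
proof (rule ccontr)
  let ?m = "M * w \<gamma> powr (-1/p)"
  assume "\<not> ?thesis"
  hence lt: "?m < \<bar>f \<gamma>\<bar>" by simp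
  have m0: "?m \<ge> 0" using M by simp
  define c where "c = (?m + \<bar>f \<gamma>\<bar>) / 2"
  have c: "c > 0" "?m < c" "c < \<bar>f \<gamma>\<bar>" using lt m0 unfolding c_def by auto
  have "ennreal (w \<gamma>) \<le> wmeasure w {\<gamma>. \<bar>f \<gamma>\<bar> > c}"
    using wm_single(2)[of \<gamma>] wm_mono[of "{\<gamma>}" "{\<gamma>. \<bar>f \<gamma>\<bar> > c}"] c by auto
  also have "\<dots> \<le> ennreal ((M / c) powr p)" using N_leD[OF M h c(1)] .
  finally have le: "w \<gamma> \<le> (M / c) powr p" by (simp add: ennreal_le_iff[symmetric] del: ennreal_le_iff) 
  have "(M / c) powr p < w \<gamma>"
  proof (cases "M = 0")
    case True thus ?thesis using wpos[of \<gamma>] by simp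
  next
    case False
    hence Mp: "M > 0" using M by simp
    have mpos: "?m > 0" using Mp wpos[of \<gamma>] by simp
    have "M / c < M / ?m" using Mp c mpos
      by (intro divide_strict_left_mono) auto
    also have "M / ?m = w \<gamma> powr (1/p)" using Mp wpos[of \<gamma>] by (simp add: powr_minus_divide divide_simps)
    finally have "(M / c) powr p < (w \<gamma> powr (1/p)) powr p"
      using Mp c p0 by (intro powr_less_mono2) auto
    thus ?thesis using p0 wpos[of \<gamma>] by (simp add: powr_powr)
  qed
  thus False using le by simp
qed


lemma N_fin_small:
  assumes G: "finite G" and d: "d \<ge> 0" and b: "\<And>\<gamma>. \<gamma> \<in> G \<Longrightarrow> \<bar>f \<gamma>\<bar> \<le> d"
  shows "wlnorm p w (\<lambda>\<gamma>. if \<gamma> \<in> G then f \<gamma> else 0) \<le> ennreal (d * (sum w G) powr (1/p))"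
proof (rule N_leI)
  have W: "sum w G \<ge> 0" using wpos by (simp add: sum_nonneg less_imp_le)
  show "0 \<le> d * (sum w G) powr (1/p)" using d by simp
  fix c :: real assume c: "c > 0"
  show "wmeasure w {\<gamma>. \<bar>if \<gamma> \<in> G then f \<gamma> else 0\<bar> > c} \<le> ennreal ((d * (sum w G) powr (1/p) / c) powr p)"
  proof (cases "d \<le> c")
    case True
    hence "{\<gamma>. \<bar>if \<gamma> \<in> G then f \<gamma> else 0\<bar> > c} = {}" using b c by (force split: if_splits)
    thus ?thesis by (simp add: wm_finite)
  next
    case False
    have "wmeasure w {\<gamma>. \<bar>if \<gamma> \<in> G then f \<gamma> else 0\<bar> > c} \<le> wmeasure w G"
      using c by (intro wm_mono) (auto split: if_splits)
    also have "\<dots> = ennreal (sum w G)" using wm_finite[OF G] .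
    also have "sum w G \<le> (d * (sum w G) powr (1/p) / c) powr p"
    proof -
      have "(d * (sum w G) powr (1/p) / c) powr p = (d / c) powr p * ((sum w G) powr (1/p)) powr p"
        using d c W by (simp add: powr_mult powr_divide)
      also have "((sum w G) powr (1/p)) powr p = sum w G" using W p0 by (simp add: powr_powr)
      also have "(d / c) powr p \<ge> 1" using False c by (intro ge_one_powr_ge_zero) (auto simp: p0 less_imp_le)
      hence "sum w G \<le> (d / c) powr p * sum w G" using W by (simp add: mult_le_cancel_right1)
      finally show ?thesis by simp
    qed
    finally show ?thesis by (simp add: ennreal_leI)
  qed
qed

lemma N_eventually_small:
  assumes G: "finite G" and lim: "\<And>\<gamma>. ((\<lambda>n. h n \<gamma>) \<longlongrightarrow> 0) sequentially" and e: "e > 0"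
  shows "eventually (\<lambda>n. wlnorm p w (\<lambda>\<gamma>. if \<gamma> \<in> G then h n \<gamma> else 0) \<le> ennreal e) sequentially"
proof -
  have W: "sum w G \<ge> 0" using wpos by (simp add: sum_nonneg less_imp_le)
  define d where "d = e / ((sum w G) powr (1/p) + 1)"
  have d: "d > 0" using e unfolding d_def by (simp add: add_nonneg_pos)
  have de: "d * (sum w G) powr (1/p) \<le> e"
  proof -
    have "d * (sum w G) powr (1/p) \<le> d * ((sum w G) powr (1/p) + 1)" using d by simp
    also have "\<dots> = e" unfolding d_def
      using add_nonneg_pos[OF powr_ge_zero[of "sum w G" "1/p"] zero_less_one] by simp
    finally show ?thesis .
  qed
  have "\<forall>\<gamma>\<in>G. eventually (\<lambda>n. \<bar>h n \<gamma>\<bar> < d) sequentially"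
  proof
    fix \<gamma> show "eventually (\<lambda>n. \<bar>h n \<gamma>\<bar> < d) sequentially"
      using lim[of \<gamma>] d by (auto simp: tendsto_iff dist_real_def elim: eventually_mono)
  qed
  hence "eventually (\<lambda>n. \<forall>\<gamma>\<in>G. \<bar>h n \<gamma>\<bar> < d) sequentially"
    using G by (simp add: eventually_ball_finite)
  thus ?thesis
  proof (rule eventually_mono)
    fix n assume "\<forall>\<gamma>\<in>G. \<bar>h n \<gamma>\<bar> < d"
    hence "wlnorm p w (\<lambda>\<gamma>. if \<gamma> \<in> G then h n \<gamma> else 0) \<le> ennreal (d * (sum w G) powr (1/p))"
      using d by (intro N_fin_small G) auto
    also have "\<dots> \<le> ennreal e" using de by (rule ennreal_leI)
    finally show "wlnorm p w (\<lambda>\<gamma>. if \<gamma> \<in> G then h n \<gamma> else 0) \<le> ennreal e" .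
  qed
qed

lemma mp_tail:
  assumes f: "f \<in> mpinf p w" and e: "e > 0"
  shows "\<exists>F. finite F \<and> wlnorm p w (\<lambda>\<gamma>. if \<gamma> \<in> F then 0 else f \<gamma>) \<le> ennreal e"
proof -
  have e4: "e/4 > 0" using e by simp
  obtain g where g: "g \<in> simple_fin w" and fg: "wlnorm p w (\<lambda>\<gamma>. f \<gamma> - g \<gamma>) < ennreal (e/4)"
    using f e4 unfolding mpinf_def by blast
  obtain n :: nat and c A where fin: "\<forall>i<n. wmeasure w (A i) < \<infinity>"
      and gdef: "g = (\<lambda>\<gamma>. \<Sum>i<n. c i * indicator (A i) \<gamma>)"
    using g unfolding simple_fin_def mem_Collect_eq by (elim exE conjE) blast
  define E where "E = (\<Union>i<n. A i)"
  have "wmeasure w E \<le> (\<Sum>i<n. wmeasure w (A i))" unfolding E_def by (rule wm_UN) simp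
  also have "\<dots> < \<infinity>" using fin by (simp add: infinity_ennreal_def)
  finally have Efin: "wmeasure w E < \<infinity>" .
  define K where "K = (\<Sum>i<n. \<bar>c i\<bar>)"
  have K0: "K \<ge> 0" unfolding K_def by (simp add: sum_nonneg)
  have gK: "\<bar>g \<gamma>\<bar> \<le> K" for \<gamma>
  proof -
    have "\<bar>g \<gamma>\<bar> \<le> (\<Sum>i<n. \<bar>c i * indicator (A i) \<gamma>\<bar>)" unfolding gdef by (rule sum_abs)
    also have "\<dots> \<le> K" unfolding K_def by (intro sum_mono) (auto simp: indicator_def)
    finally show ?thesis .
  qed
  have gE: "\<gamma> \<notin> E \<Longrightarrow> g \<gamma> = 0" for \<gamma> unfolding gdef E_def by (auto simp: indicator_def)
  define d where "d = (e / 4 / (K + 1)) powr p"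
  have d: "d > 0" using e K0 unfolding d_def by simp
  obtain F where F: "finite F" "F \<subseteq> E" "wmeasure w (E - F) \<le> ennreal d"
    using wm_approx[OF Efin d] by blast
  have gt: "wlnorm p w (\<lambda>\<gamma>. if \<gamma> \<in> F then 0 else g \<gamma>) \<le> ennreal (e/4)"
  proof (rule N_leI)
    show "0 \<le> e/4" using e by simp
    fix c :: real assume c: "c > 0"
    show "wmeasure w {\<gamma>. \<bar>if \<gamma> \<in> F then 0 else g \<gamma>\<bar> > c} \<le> ennreal ((e / 4 / c) powr p)"
    proof (cases "K \<le> c")
      case True
      hence "{\<gamma>. \<bar>if \<gamma> \<in> F then 0 else g \<gamma>\<bar> > c} = {}" using gK c by (force simp: not_less intro: order_trans)
      thus ?thesis by (simp add: wm_finite)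
    next
      case False
      have "wmeasure w {\<gamma>. \<bar>if \<gamma> \<in> F then 0 else g \<gamma>\<bar> > c} \<le> wmeasure w (E - F)"
        using c gE by (intro wm_mono) (force split: if_splits)
      also have "\<dots> \<le> ennreal d" by (rule F(3))
      also have "d \<le> (e / 4 / c) powr p" unfolding d_def using False c e K0
        by (intro powr_mono2 divide_left_mono) (auto simp: p0 less_imp_le)
      finally show ?thesis by (simp add: ennreal_leI)
    qed
  qed
  have "wlnorm p w (\<lambda>\<gamma>. if \<gamma> \<in> F then 0 else f \<gamma>) \<le> ennreal (2 * (e/4 + e/4))"
    by (rule N_tri[OF _ less_imp_le[OF fg] gt]) (use e in auto)
  also have "2 * (e/4 + e/4) = e" by simp
  finally show ?thesis using F(1) by blast
qed

lemma half_sum_le: "finite S \<Longrightarrow> (\<Sum>j\<in>S. (1/2::real) ^ Suc j) \<le> 1"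
proof -
  assume S: "finite S"
  have geo: "(\<Sum>j<n. (1/2::real) ^ Suc j) = 1 - (1/2)^n" for n
    by (induction n) auto
  obtain n where "S \<subseteq> {..<n}" using S finite_nat_iff_bounded by blast
  hence "(\<Sum>j\<in>S. (1/2::real) ^ Suc j) \<le> (\<Sum>j<n. (1/2::real) ^ Suc j)"
    by (intro sum_mono2) auto
  also have "\<dots> \<le> 1" unfolding geo by simp
  finally show ?thesis .
qed

lemma N_sum_err:
  assumes S: "finite S" and r: "\<And>j. j \<in> S \<Longrightarrow> wlnorm p w (r j) \<le> ennreal ((1/4) ^ Suc j)"
  shows "wlnorm p w (\<lambda>\<gamma>. \<Sum>j\<in>S. r j \<gamma>) \<le> ennreal 1"
proof (rule N_leI)
  show "(0::real) \<le> 1" by simp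
  fix c :: real assume c: "c > 0"
  have sub: "{\<gamma>. \<bar>\<Sum>j\<in>S. r j \<gamma>\<bar> > c} \<subseteq> (\<Union>j\<in>S. {\<gamma>. \<bar>r j \<gamma>\<bar> > c * (1/2) ^ Suc j})"
  proof
    fix \<gamma> assume "\<gamma> \<in> {\<gamma>. \<bar>\<Sum>j\<in>S. r j \<gamma>\<bar> > c}"
    hence gt: "\<bar>\<Sum>j\<in>S. r j \<gamma>\<bar> > c" by simp
    show "\<gamma> \<in> (\<Union>j\<in>S. {\<gamma>. \<bar>r j \<gamma>\<bar> > c * (1/2) ^ Suc j})"
    proof (rule ccontr)
      assume "\<not> ?thesis"
      hence le: "\<And>j. j \<in> S \<Longrightarrow> \<bar>r j \<gamma>\<bar> \<le> c * (1/2) ^ Suc j" by (auto simp: not_less)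
      have "\<bar>\<Sum>j\<in>S. r j \<gamma>\<bar> \<le> (\<Sum>j\<in>S. \<bar>r j \<gamma>\<bar>)" by (rule sum_abs)
      also have "\<dots> \<le> (\<Sum>j\<in>S. c * (1/2) ^ Suc j)" using le by (rule sum_mono)
      also have "\<dots> = c * (\<Sum>j\<in>S. (1/2) ^ Suc j)" by (simp add: sum_distrib_left)
      also have "\<dots> \<le> c * 1" using half_sum_le[OF S] c by (intro mult_left_mono) auto
      finally show False using gt by simp
    qed
  qed
  have "wmeasure w {\<gamma>. \<bar>\<Sum>j\<in>S. r j \<gamma>\<bar> > c} \<le> (\<Sum>j\<in>S. wmeasure w {\<gamma>. \<bar>r j \<gamma>\<bar> > c * (1/2) ^ Suc j})"
    using wm_mono[OF sub] wm_UN[OF S] order_trans by blast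
  also have "\<dots> \<le> (\<Sum>j\<in>S. ennreal ((1/2) ^ Suc j * (1 / c) powr p))"
  proof (rule sum_mono)
    fix j assume j: "j \<in> S"
    have cj: "c * (1/2) ^ Suc j > 0" using c by simp
    have "wmeasure w {\<gamma>. \<bar>r j \<gamma>\<bar> > c * (1/2) ^ Suc j} \<le> ennreal (((1/4) ^ Suc j / (c * (1/2) ^ Suc j)) powr p)"
      by (rule N_leD[OF _ r[OF j] cj]) simp
    also have "(1/4::real) ^ Suc j / (c * (1/2) ^ Suc j) = (1/2) ^ Suc j * (1 / c)"
      using c by (simp add: power_divide field_simps power_mult_distrib[symmetric])
    also have "((1/2::real) ^ Suc j * (1 / c)) powr p = ((1/2) ^ Suc j) powr p * (1 / c) powr p"
      using c by (intro powr_mult)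
    also have "((1/2::real) ^ Suc j) powr p \<le> (1/2) ^ Suc j"
    proof -
      have h: "(1/2::real)^Suc j \<le> 1" by (rule power_le_one) auto
      show ?thesis using h p1 by (intro powr_le_one_le) auto
    qed
    hence "((1/2::real) ^ Suc j) powr p * (1 / c) powr p \<le> (1/2) ^ Suc j * (1 / c) powr p"
      by (intro mult_right_mono) auto
    finally show "wmeasure w {\<gamma>. \<bar>r j \<gamma>\<bar> > c * (1/2) ^ Suc j} \<le> ennreal ((1/2) ^ Suc j * (1 / c) powr p)"
      by (simp add: ennreal_leI)
  qed
  also have "\<dots> = ennreal (\<Sum>j\<in>S. (1/2) ^ Suc j * (1 / c) powr p)"
    by (rule sum_ennreal) simp
  also have "(\<Sum>j\<in>S. (1/2) ^ Suc j * (1 / c) powr p) = (\<Sum>j\<in>S. (1/2::real) ^ Suc j) * (1 / c) powr p"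
    by (simp add: sum_distrib_right)
  also have "\<dots> \<le> 1 * (1 / c) powr p" using half_sum_le[OF S] by (intro mult_right_mono) auto
  finally show "wmeasure w {\<gamma>. \<bar>\<Sum>j\<in>S. r j \<gamma>\<bar> > c} \<le> ennreal ((1 / c) powr p)" by (simp add: ennreal_leI)
qed


lemma glide:
  fixes h :: "nat \<Rightarrow> 'a \<Rightarrow> real" and \<delta> :: "nat \<Rightarrow> real"
  assumes lim: "\<And>\<gamma>. ((\<lambda>n. h n \<gamma>) \<longlongrightarrow> 0) sequentially"
    and tail: "\<And>n e. e > 0 \<Longrightarrow> \<exists>F. finite F \<and> wlnorm p w (\<lambda>\<gamma>. if \<gamma> \<in> F then 0 else h n \<gamma>) \<le> ennreal e"
    and dpos: "\<And>j. \<delta> j > 0"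
  shows "\<exists>m D. strict_mono m \<and> (\<forall>j. finite (D j)) \<and> (\<forall>i j. i \<noteq> j \<longrightarrow> D i \<inter> D j = {}) \<and>
     (\<forall>j. wlnorm p w (\<lambda>\<gamma>. if \<gamma> \<in> D j then 0 else h (m j) \<gamma>) \<le> ennreal (\<delta> j))"
proof -
  let ?P = "\<lambda>(j::nat) (x :: nat \<times> 'a set). finite (snd x)"
  let ?Q = "\<lambda>(j::nat) (x :: nat \<times> 'a set) (y :: nat \<times> 'a set). fst x < fst y \<and> snd x \<subseteq> snd y \<and>
      wlnorm p w (\<lambda>\<gamma>. if \<gamma> \<in> snd y - snd x then 0 else h (fst y) \<gamma>) \<le> ennreal (\<delta> j)"
  have step: "\<exists>y. ?P (Suc j) y \<and> ?Q j x y" if Px: "?P j x" for x j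
  proof -
    obtain n G where x: "x = (n, G)" by (cases x)
    have G: "finite G" using Px x by simp
    have d4: "\<delta> j / 4 > 0" using dpos[of j] by simp
    obtain N0 where N0: "\<And>n'. n' \<ge> N0 \<Longrightarrow> wlnorm p w (\<lambda>\<gamma>. if \<gamma> \<in> G then h n' \<gamma> else 0) \<le> ennreal (\<delta> j / 4)"
      using N_eventually_small[where h=h, OF G lim d4] unfolding eventually_sequentially by blast
    define n' where "n' = max N0 (Suc n)"
    have n'1: "wlnorm p w (\<lambda>\<gamma>. if \<gamma> \<in> G then h n' \<gamma> else 0) \<le> ennreal (\<delta> j / 4)"
      using N0 unfolding n'_def by simp
    obtain F where F: "finite F" "wlnorm p w (\<lambda>\<gamma>. if \<gamma> \<in> F then 0 else h n' \<gamma>) \<le> ennreal (\<delta> j / 4)"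
      using tail[OF d4] by blast
    have "wlnorm p w (\<lambda>\<gamma>. if \<gamma> \<in> (G \<union> F) - G then 0 else h n' \<gamma>) \<le> ennreal (2 * (\<delta> j / 4 + \<delta> j / 4))"
      by (rule N_tri[OF _ n'1 F(2)]) (use d4 in auto)
    also have "2 * (\<delta> j / 4 + \<delta> j / 4) = \<delta> j / 1" by simp
    finally have "wlnorm p w (\<lambda>\<gamma>. if \<gamma> \<in> (G \<union> F) - G then 0 else h n' \<gamma>) \<le> ennreal (\<delta> j)" by simp
    moreover have "n < n'" unfolding n'_def by simp
    ultimately have "?P (Suc j) (n', G \<union> F) \<and> ?Q j x (n', G \<union> F)"
      using G F(1) unfolding x fst_conv snd_conv by auto
    thus ?thesis by blast
  qed
  have ex0: "\<exists>x. ?P 0 x" by (intro exI[of _ "(0, {})"]) simp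
  obtain x where x: "\<And>j. ?P j (x j) \<and> ?Q j (x j) (x (Suc j))"
    using dependent_nat_choice[of ?P ?Q, OF ex0 step] by blast
  define m where "m j = fst (x (Suc j))" for j
  define D where "D j = snd (x (Suc j)) - snd (x j)" for j
  have sm: "strict_mono m" unfolding m_def
    by (rule strict_monoI_Suc) (use x in auto)
  have Gmono: "snd (x i) \<subseteq> snd (x k)" if "i \<le> k" for i k
    using lift_Suc_mono_le[of "\<lambda>j. snd (x j)", OF _ that] x by blast
  have fin: "finite (D j)" for j unfolding D_def using x[of "Suc j"] by simp
  have disj: "D i \<inter> D k = {}" if "i < k" for i k
  proof -
    have "D i \<subseteq> snd (x k)" unfolding D_def using Gmono[of "Suc i" k] that by auto
    thus ?thesis unfolding D_def by auto
  qed
  have disj2: "\<forall>i k. i \<noteq> k \<longrightarrow> D i \<inter> D k = {}"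
    using disj by (metis inf_commute linorder_neqE_nat)
  have nb: "\<forall>j. wlnorm p w (\<lambda>\<gamma>. if \<gamma> \<in> D j then 0 else h (m j) \<gamma>) \<le> ennreal (\<delta> j)"
    unfolding D_def m_def using x by blast
  show ?thesis using sm fin disj2 nb by blast
qed


definition ev :: "nat \<Rightarrow> nat \<Rightarrow> real" where "ev k = (\<lambda>n. if n = k then 1 else 0)"

lemma comb_eval: "finite K \<Longrightarrow> (\<Sum>k\<in>K. c k * ev k m) = (if m \<in> K then c m else 0)"
  unfolding ev_def by (simp add: if_distrib sum.delta' cong: if_cong)

lemma fs_l2: "finite K \<Longrightarrow> (\<And>n. n \<notin> K \<Longrightarrow> x n = 0) \<Longrightarrow> x \<in> l2seq"
  unfolding l2seq_def mem_Collect_eq by (rule summable_finite[of K]) auto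

lemma fs_norm: "finite K \<Longrightarrow> (\<And>n. n \<notin> K \<Longrightarrow> x n = 0) \<Longrightarrow> l2norm x = sqrt (\<Sum>n\<in>K. (x n)\<^sup>2)"
  unfolding l2norm_def by (subst suminf_finite[of K]) auto

lemma comb_l2: "finite K \<Longrightarrow> (\<lambda>n. \<Sum>k\<in>K. c k * ev k n) \<in> l2seq"
  by (rule fs_l2[of K]) (auto simp: comb_eval)

lemma T_comb:
  assumes L: "\<forall>x\<in>l2seq. \<forall>y\<in>l2seq. \<forall>a b. T (\<lambda>n. a * x n + b * y n) = (\<lambda>\<gamma>. a * T x \<gamma> + b * T y \<gamma>)"
  shows "finite K \<Longrightarrow> T (\<lambda>n. \<Sum>k\<in>K. c k * ev k n) = (\<lambda>\<gamma>. \<Sum>k\<in>K. c k * T (ev k) \<gamma>)"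
proof (induction K rule: finite_induct)
  case empty
  have e0: "ev 0 \<in> l2seq" unfolding ev_def by (rule fs_l2[of "{0}"]) auto
  have "T (\<lambda>n. 0 * ev 0 n + 0 * ev 0 n) = (\<lambda>\<gamma>. 0 * T (ev 0) \<gamma> + 0 * T (ev 0) \<gamma>)"
    using L e0 by blast
  thus ?case by simp
next
  case (insert k K)
  have ek: "ev k \<in> l2seq" unfolding ev_def by (rule fs_l2[of "{k}"]) auto
  have r: "(\<lambda>n. \<Sum>k\<in>K. c k * ev k n) \<in> l2seq" using comb_l2[OF insert(1)] .
  have "T (\<lambda>n. c k * ev k n + 1 * (\<Sum>k\<in>K. c k * ev k n)) = (\<lambda>\<gamma>. c k * T (ev k) \<gamma> + 1 * T (\<lambda>n. \<Sum>k\<in>K. c k * ev k n) \<gamma>)"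
    by (rule L[rule_format, OF ek r])
  thus ?case using insert by simp
qed

lemma T_null:
  assumes L: "\<forall>x\<in>l2seq. \<forall>y\<in>l2seq. \<forall>a b. T (\<lambda>n. a * x n + b * y n) = (\<lambda>\<gamma>. a * T x \<gamma> + b * T y \<gamma>)"
    and U: "\<And>x. x \<in> l2seq \<Longrightarrow> wlnorm p w (T x) \<le> ennreal (B * l2norm x)" and B: "B \<ge> 0"
  shows "((\<lambda>k. T (ev k) \<gamma>) \<longlongrightarrow> 0) sequentially"
proof -
  define v where "v k = T (ev k) \<gamma>" for k
  define W where "W = w \<gamma> powr (-1/p)"
  have W0: "W \<ge> 0" unfolding W_def by simp
  have bound: "(\<Sum>k<n. (v k)\<^sup>2) \<le> (B * W)\<^sup>2" for n
  proof -
    define x where "x = (\<lambda>m. \<Sum>k\<in>{..<n}. v k * ev k m)"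
    have xl: "x \<in> l2seq" unfolding x_def by (rule comb_l2) simp
    have xm: "x m = (if m \<in> {..<n} then v m else 0)" for m unfolding x_def by (rule comb_eval) simp
    have nx: "l2norm x = sqrt (\<Sum>k<n. (v k)\<^sup>2)"
      by (subst fs_norm[of "{..<n}"]) (auto simp: xm)
    have Tx: "T x \<gamma> = (\<Sum>k<n. (v k)\<^sup>2)"
      unfolding x_def T_comb[OF L finite_lessThan] v_def by (simp add: power2_eq_square)
    define s where "s = (\<Sum>k<n. (v k)\<^sup>2)"
    have s0: "s \<ge> 0" unfolding s_def by (simp add: sum_nonneg)
    have "\<bar>T x \<gamma>\<bar> \<le> (B * l2norm x) * W"
      unfolding W_def by (rule N_point[OF _ U[OF xl]]) (use B nx in \<open>simp add: sum_nonneg\<close>)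
    hence le: "s \<le> B * sqrt s * W" using s0 unfolding Tx nx s_def[symmetric] by simp
    show ?thesis
    proof (cases "s = 0")
      case True thus ?thesis unfolding s_def[symmetric] by simp
    next
      case False
      hence sp: "sqrt s > 0" using s0 by simp
      have "sqrt s * sqrt s \<le> (B * W) * sqrt s" using le s0 by (simp add: mult_ac)
      hence "sqrt s \<le> B * W" using sp by (rule mult_right_le_imp_le)
      hence "(sqrt s)\<^sup>2 \<le> (B * W)\<^sup>2" using sp by (intro power_mono) auto
      thus ?thesis using s0 unfolding s_def[symmetric] by simp
    qed
  qed
  have "summable (\<lambda>k. (v k)\<^sup>2)"
    by (rule summableI_nonneg_bounded[OF _ bound]) simp
  hence "(\<lambda>k. (v k)\<^sup>2) \<longlonglongrightarrow> 0" by (rule summable_LIMSEQ_zero)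
  hence "(\<lambda>k. sqrt ((v k)\<^sup>2)) \<longlonglongrightarrow> sqrt 0" by (rule tendsto_real_sqrt)
  hence "(\<lambda>k. \<bar>v k\<bar>) \<longlonglongrightarrow> 0" by simp
  thus ?thesis unfolding v_def by (simp add: tendsto_rabs_zero_iff)
qed


lemma big_nat:
  fixes a K :: real assumes a: "a > 0"
  shows "\<exists>s::nat. s \<ge> 1 \<and> real s powr a > K"
proof -
  define z where "z = (max K 1 + 1) powr (1/a)"
  have z0: "z > 0" unfolding z_def by simp
  define s where "s = nat \<lceil>z\<rceil>"
  have sz: "real s \<ge> z" unfolding s_def by linarith
  have s1: "s \<ge> 1" using z0 unfolding s_def by linarith
  have "real s powr a \<ge> z powr a" using sz z0 a by (intro powr_mono2) auto
  also have "z powr a = max K 1 + 1" unfolding z_def using a by (simp add: powr_powr)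
  finally have "real s powr a > K" by linarith
  thus ?thesis using s1 by blast
qed

lemma p_gt2:
  fixes \<sigma> :: "nat \<Rightarrow> real \<Rightarrow> real"
  assumes p2: "p > 2" and A: "A > 0" and B: "B \<ge> 0"
    and F2: "\<And>S M. finite S \<Longrightarrow> M \<ge> 0 \<Longrightarrow> (\<And>c. c > 0 \<Longrightarrow> (\<Sum>j\<in>S. \<sigma> j c) \<le> (M / c) powr p) \<Longrightarrow> A * sqrt (card S) \<le> 2 * (M + 1)"
    and F3: "\<And>j c. c > 0 \<Longrightarrow> \<sigma> j c \<le> (B / c) powr p"
  shows False
proof -
  have a: "1/2 - 1/p > 0" using p2 by (simp add: field_simps)
  obtain s :: nat where s1: "s \<ge> 1" and sbig: "real s powr (1/2 - 1/p) > 2 * (B + 1) / A"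
    using big_nat[OF a] by blast
  define M where "M = real s powr (1/p) * B"
  have M0: "M \<ge> 0" unfolding M_def using B by simp
  have "A * sqrt (card {..<s}) \<le> 2 * (M + 1)"
  proof (rule F2[OF finite_lessThan M0])
    fix c :: real assume c: "c > 0"
    have "(\<Sum>j<s. \<sigma> j c) \<le> (\<Sum>j<s. (B / c) powr p)" using F3[OF c] by (intro sum_mono) auto
    also have "\<dots> = real s * (B / c) powr p" by simp
    also have "real s = (real s powr (1/p)) powr p" using p0 s1 by (simp add: powr_powr)
    also have "(real s powr (1/p)) powr p * (B / c) powr p = (M / c) powr p"
      unfolding M_def using B c by (simp add: powr_mult[symmetric] times_divide_eq_right)
    finally show "(\<Sum>j\<in>{..<s}. \<sigma> j c) \<le> (M / c) powr p" by simp
  qed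
  hence le: "A * sqrt s \<le> 2 * (M + 1)" by simp
  have sp1: "real s powr (1/p) \<ge> 1" using s1 p0 by (intro ge_one_powr_ge_zero) auto
  have "2 * (M + 1) \<le> 2 * (B + 1) * real s powr (1/p)"
    unfolding M_def using sp1 B by (simp add: algebra_simps)
  also have "\<dots> < A * real s powr (1/2 - 1/p) * real s powr (1/p)"
    using sbig A sp1 s1 by (intro mult_strict_right_mono) (auto simp: field_simps)
  also have "\<dots> = A * sqrt s"
    using s1 by (simp add: mult.assoc powr_add[symmetric] powr_half_sqrt)
  finally show False using le by simp
qed


lemma p_lt2:
  fixes \<sigma> :: "nat \<Rightarrow> real \<Rightarrow> real" and U W :: "nat \<Rightarrow> real"
  assumes p2: "p < 2" and A: "A > 0" and B: "B \<ge> 0"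
    and F1: "\<And>S c. finite S \<Longrightarrow> c > 0 \<Longrightarrow> (\<Sum>j\<in>S. \<sigma> j c) \<le> (2 * (B * sqrt (card S) + 1) / c) powr p"
    and F2: "\<And>S M. finite S \<Longrightarrow> M \<ge> 0 \<Longrightarrow> (\<And>c. c > 0 \<Longrightarrow> (\<Sum>j\<in>S. \<sigma> j c) \<le> (M / c) powr p) \<Longrightarrow> A * sqrt (card S) \<le> 2 * (M + 1)"
    and F3: "\<And>j c. c > 0 \<Longrightarrow> \<sigma> j c \<le> (B / c) powr p"
    and sig0: "\<And>j c. c > 0 \<Longrightarrow> \<sigma> j c \<ge> 0"
    and anti: "\<And>j c c'. 0 < c \<Longrightarrow> c \<le> c' \<Longrightarrow> \<sigma> j c' \<le> \<sigma> j c"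
    and Upos: "\<And>j. U j > 0" and zeroU: "\<And>j c. U j \<le> c \<Longrightarrow> \<sigma> j c = 0"
    and Wb: "\<And>j c. c > 0 \<Longrightarrow> \<sigma> j c \<le> W j" and W0: "\<And>j. W j \<ge> 0"
  shows False
proof -
  have sel: "\<exists>j\<ge>N0. \<sigma> j L \<le> e" if L: "L > 0" and e: "e > 0" for L e N0
  proof (rule ccontr)
    assume "\<not> ?thesis"
    hence gt: "\<And>j. j \<ge> N0 \<Longrightarrow> e < \<sigma> j L" by (meson not_le)
    define C where "C = (2 * (B + 1) / L) powr p"
    have a: "1 - p/2 > 0" using p2 by simp
    obtain s :: nat where s1: "s \<ge> 1" and sbig: "real s powr (1 - p/2) > C / e"
      using big_nat[OF a] by blast
    define S where "S = {N0..<N0+s}"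
    have cS: "card S = s" unfolding S_def by simp
    have "(\<Sum>j\<in>S. e) \<le> (\<Sum>j\<in>S. \<sigma> j L)" using gt unfolding S_def by (intro sum_mono) (auto intro: less_imp_le)
    hence lo: "real s * e \<le> (\<Sum>j\<in>S. \<sigma> j L)" using cS by simp
    have "(\<Sum>j\<in>S. \<sigma> j L) \<le> (2 * (B * sqrt s + 1) / L) powr p"
      using F1[of S L] L cS unfolding S_def by simp
    also have "\<dots> \<le> (2 * (B + 1) * sqrt s / L) powr p"
    proof -
      have "sqrt s \<ge> 1" using s1 by simp
      hence "B * sqrt s + 1 \<le> (B + 1) * sqrt s" using B by (simp add: algebra_simps)
      hence "2 * (B * sqrt s + 1) \<le> 2 * (B + 1) * sqrt s" by (simp add: algebra_simps)
      thus ?thesis using L B p0 by (intro powr_mono2 divide_right_mono) auto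
    qed
    also have "(2 * (B + 1) * sqrt s / L) = (2 * (B + 1) / L) * sqrt s" by simp
    also have "((2 * (B + 1) / L) * sqrt s) powr p = C * (sqrt s) powr p"
      unfolding C_def using L B by (intro powr_mult)
    also have "(sqrt s) powr p = real s powr (p/2)"
      by (simp add: powr_half_sqrt[symmetric] powr_powr)
    finally have up: "(\<Sum>j\<in>S. \<sigma> j L) \<le> C * real s powr (p/2)" .
    have "real s = real s powr (1 - p/2) * real s powr (p/2)"
      using s1 by (simp add: powr_add[symmetric])
    hence "real s * e = (e * real s powr (1 - p/2)) * real s powr (p/2)" by (simp add: mult_ac)
    also have "\<dots> > C * real s powr (p/2)"
      using sbig e s1 by (intro mult_strict_right_mono) (auto simp: field_simps)
    finally show False using lo up by simp
  qed
  define eps :: "nat \<Rightarrow> real" where "eps i = (1/2) ^ Suc i" for i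
  have eps0: "eps i > 0" for i unfolding eps_def by simp
  define l where "l i j = (eps i / (W j + 1)) powr (1/p)" for i j
  have l0: "l i j > 0" for i j unfolding l_def using eps0[of i] W0[of j] by simp
  have low: "c powr p * \<sigma> j c \<le> eps i" if c: "c > 0" "c < l i j" for c i j
  proof -
    have "c powr p \<le> (l i j) powr p" using c p0 by (intro powr_mono2) auto
    also have "(l i j) powr p = eps i / (W j + 1)" unfolding l_def using eps0[of i] W0[of j] p0
      by (simp add: powr_powr)
    finally have cp: "c powr p \<le> eps i / (W j + 1)" .
    have "c powr p * \<sigma> j c \<le> eps i / (W j + 1) * W j"
      using cp Wb[OF c(1)] sig0[OF c(1)] eps0[of i] W0[of j] by (intro mult_mono) auto
    also have "\<dots> \<le> eps i" using eps0[of i] W0[of j] by (simp add: field_simps)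
    finally show ?thesis .
  qed
  let ?P = "\<lambda>(i::nat) (x :: nat \<times> real \<times> real). 0 < fst (snd x) \<and> fst (snd x) \<le> l i (fst x) \<and> U (fst x) \<le> snd (snd x)"
  let ?Q = "\<lambda>(i::nat) (x :: nat \<times> real \<times> real) (y :: nat \<times> real \<times> real). fst x < fst y \<and>
      snd (snd x) powr p * \<sigma> (fst y) (fst (snd x)) \<le> eps (Suc i) \<and> fst (snd y) \<le> fst (snd x) \<and> snd (snd x) \<le> snd (snd y)"
  have ex0: "\<exists>x. ?P 0 x" using l0 by (intro exI[of _ "(0, l 0 0, U 0)"]) auto
  have step: "\<exists>y. ?P (Suc i) y \<and> ?Q i x y" if Px: "?P i x" for x i
  proof -
    obtain j Lo Up where x: "x = (j, Lo, Up)" by (cases x) auto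
    have Lo: "Lo > 0" and Up: "Up > 0" using Px x Upos[of j] by auto
    have e: "eps (Suc i) / Up powr p > 0" using eps0 Up by simp
    obtain j' where j': "j' \<ge> Suc j" "\<sigma> j' Lo \<le> eps (Suc i) / Up powr p"
      using sel[OF Lo e] by blast
    have "Up powr p * \<sigma> j' Lo \<le> eps (Suc i)"
      using j'(2) Up by (simp add: field_simps)
    hence "?P (Suc i) (j', min Lo (l (Suc i) j'), max Up (U j')) \<and> ?Q i x (j', min Lo (l (Suc i) j'), max Up (U j'))"
      using Lo l0 j'(1) unfolding x by auto
    thus ?thesis by blast
  qed
  obtain x where x: "\<And>i. ?P i (x i) \<and> ?Q i (x i) (x (Suc i))"
    using dependent_nat_choice[of ?P ?Q, OF ex0 step] by blast
  define J where "J i = fst (x i)" for i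
  define Lo where "Lo i = fst (snd (x i))" for i
  define Up where "Up i = snd (snd (x i))" for i
  have Lo0: "Lo i > 0" for i unfolding Lo_def using x[of i] by auto
  have Lol: "Lo i \<le> l i (J i)" for i unfolding Lo_def J_def using x[of i] by auto
  have UUp: "U (J i) \<le> Up i" for i unfolding Up_def J_def using x[of i] by auto
  have Q1: "Up i powr p * \<sigma> (J (Suc i)) (Lo i) \<le> eps (Suc i)" for i
    unfolding Up_def J_def Lo_def using x[of i] by auto
  have Jsm: "strict_mono J" unfolding J_def by (rule strict_monoI_Suc) (use x in auto)
  have Lo_anti: "Lo k \<le> Lo i" if "i \<le> k" for i k
    using lift_Suc_antimono_le[of Lo, OF _ that] x unfolding Lo_def by auto
  have Up_mono: "Up i \<le> Up k" if "i \<le> k" for i k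
    using lift_Suc_mono_le[of Up, OF _ that] x unfolding Up_def by auto
  have T0: "c powr p * \<sigma> j c \<le> B powr p" if c: "c > 0" for c j
  proof -
    have "c powr p * \<sigma> j c \<le> c powr p * (B / c) powr p" using F3[OF c] by (intro mult_left_mono) auto
    also have "\<dots> = B powr p" using c B by (simp add: powr_divide)
    finally show ?thesis .
  qed
  have T1: "c powr p * \<sigma> (J i) c \<le> eps i" if c: "c > 0" "c < Lo i" for c i
    using low[OF c(1)] c Lol[of i] by fastforce
  have T2: "c powr p * \<sigma> (J i) c \<le> eps i" if c: "c > 0" "Up i < c" for c i
    using zeroU[of "J i" c] UUp[of i] c eps0[of i] by simp
  have T3: "c powr p * \<sigma> (J k) c \<le> eps k" if c: "c > 0" "Lo i \<le> c" "c \<le> Up i" and ik: "i < k" for c i k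
  proof -
    obtain k' where k: "k = Suc k'" using ik by (cases k) auto
    have ik': "i \<le> k'" using ik k by simp
    have c1: "Lo k' \<le> c" using Lo_anti[OF ik'] c by simp
    have c2: "c \<le> Up k'" using Up_mono[OF ik'] c by simp
    have "c powr p * \<sigma> (J k) c \<le> Up k' powr p * \<sigma> (J k) (Lo k')"
      using c c1 c2 p0 sig0[OF c(1)] anti[OF Lo0 c1] by (intro mult_mono powr_mono2) auto
    also have "\<dots> \<le> eps k" using Q1[of k'] k by simp
    finally show ?thesis .
  qed
  have sumb: "(\<Sum>i<n. c powr p * \<sigma> (J i) c) \<le> B powr p + 1" if c: "c > 0" for c n
  proof -
    define I0 where "I0 = {i. Lo i \<le> c \<and> c \<le> Up i}"
    define i0 where "i0 = (LEAST i. i \<in> I0)"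
    have tb: "c powr p * \<sigma> (J i) c \<le> eps i + (if i = i0 then B powr p else 0)" for i
    proof (cases "i \<in> I0")
      case False
      hence "c < Lo i \<or> Up i < c" unfolding I0_def by auto
      hence "c powr p * \<sigma> (J i) c \<le> eps i" using T1[OF c] T2[OF c] by auto
      moreover have "0 \<le> (if i = i0 then B powr p else 0)" by simp
      ultimately show ?thesis by linarith
    next
      case True
      show ?thesis
      proof (cases "i = i0")
        case True
        have "c powr p * \<sigma> (J i) c \<le> B powr p" using T0[OF c] .
        thus ?thesis using True eps0[of i] by simp
      next
        case False
        have "i0 \<le> i" unfolding i0_def using True by (rule Least_le)
        hence "i0 < i" using False by simp
        moreover have "i0 \<in> I0" unfolding i0_def using True by (rule LeastI)
        ultimately have "c powr p * \<sigma> (J i) c \<le> eps i" using T3[OF c] unfolding I0_def by blast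
        thus ?thesis using False by simp
      qed
    qed
    have "(\<Sum>i<n. c powr p * \<sigma> (J i) c) \<le> (\<Sum>i<n. eps i + (if i = i0 then B powr p else 0))"
      by (intro sum_mono tb)
    also have "\<dots> = (\<Sum>i<n. eps i) + (\<Sum>i<n. (if i = i0 then B powr p else 0))"
      by (simp add: sum.distrib)
    also have "(\<Sum>i<n. (if i = i0 then B powr p else 0)) \<le> B powr p"
      by (simp add: sum.delta)
    also have "(\<Sum>i<n. eps i) \<le> 1" unfolding eps_def using half_sum_le by simp
    finally show ?thesis by simp
  qed
  define M where "M = (B powr p + 1) powr (1/p)"
  have M0: "M \<ge> 0" unfolding M_def by simp
  obtain n :: nat where n1: "n \<ge> 1" and nbig: "real n powr (1/2) > 2 * (M + 1) / A"
    using big_nat[of "1/2"] by auto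
  have injJ: "inj_on J {..<n}" using Jsm strict_mono_imp_inj_on by blast
  have cardS: "card (J ` {..<n}) = n" using card_image[OF injJ] by simp
  have "A * sqrt (card (J ` {..<n})) \<le> 2 * (M + 1)"
  proof (rule F2[OF finite_imageI[OF finite_lessThan] M0])
    fix c :: real assume c: "c > 0"
    have "(\<Sum>j\<in>J ` {..<n}. \<sigma> j c) = (\<Sum>i<n. \<sigma> (J i) c)" by (rule sum.reindex[OF injJ, unfolded comp_def])
    also have "\<dots> = (\<Sum>i<n. c powr p * \<sigma> (J i) c) / c powr p"
      using c by (simp add: sum_distrib_left[symmetric])
    also have "\<dots> \<le> (B powr p + 1) / c powr p" using sumb[OF c] c by (intro divide_right_mono) auto
    also have "(B powr p + 1) = M powr p" unfolding M_def using p0 by (simp add: powr_powr add_nonneg_nonneg)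
    also have "M powr p / c powr p = (M / c) powr p" using M0 c by (simp add: powr_divide)
    finally show "(\<Sum>j\<in>J ` {..<n}. \<sigma> j c) \<le> (M / c) powr p" .
  qed
  hence "A * sqrt n \<le> 2 * (M + 1)" using cardS by simp
  moreover have "2 * (M + 1) < A * sqrt n"
    using nbig A by (simp add: powr_half_sqrt field_simps)
  ultimately show False by simp
qed


lemma main:
  fixes T :: "(nat \<Rightarrow> real) \<Rightarrow> ('a \<Rightarrow> real)"
  assumes p2: "p \<noteq> 2"
    and L: "\<forall>x\<in>l2seq. \<forall>y\<in>l2seq. \<forall>a b. T (\<lambda>n. a * x n + b * y n) = (\<lambda>\<gamma>. a * T x \<gamma> + b * T y \<gamma>)"
    and Mp: "\<forall>x\<in>l2seq. T x \<in> mpinf p w"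
    and A: "0 < A"
    and AB: "\<forall>x\<in>l2seq. ennreal (A * l2norm x) \<le> wlnorm p w (T x) \<and> wlnorm p w (T x) \<le> ennreal (B * l2norm x)"
  shows False
proof -
  have evl: "ev k \<in> l2seq" for k unfolding ev_def by (rule fs_l2[of "{k}"]) auto
  have evn: "l2norm (ev k) = 1" for k unfolding ev_def by (subst fs_norm[of "{k}"]) auto
  have U: "\<And>x. x \<in> l2seq \<Longrightarrow> wlnorm p w (T x) \<le> ennreal (B * l2norm x)" using AB by blast
  have Lo: "\<And>x. x \<in> l2seq \<Longrightarrow> ennreal (A * l2norm x) \<le> wlnorm p w (T x)" using AB by blast
  have AleB: "ennreal A \<le> ennreal B" using U[OF evl[of 0]] Lo[OF evl[of 0]] evn[of 0] by simp
  have B0: "B \<ge> 0"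
  proof (rule ccontr)
    assume "\<not> B \<ge> 0"
    hence "ennreal B = 0" by (simp add: ennreal_neg)
    thus False using AleB A by simp
  qed
  define h where "h k = T (ev k)" for k
  have lim: "\<And>\<gamma>. ((\<lambda>k. h k \<gamma>) \<longlongrightarrow> 0) sequentially"
    unfolding h_def by (rule T_null[OF L U B0])
  have tail: "\<exists>F. finite F \<and> wlnorm p w (\<lambda>\<gamma>. if \<gamma> \<in> F then 0 else h n \<gamma>) \<le> ennreal e" if "e > 0" for n e
    unfolding h_def using mp_tail[OF _ that] Mp evl by blast
  obtain m D where sm: "strict_mono m" and Dfin: "\<And>j. finite (D j)"
      and Ddisj: "\<And>i j. i \<noteq> j \<Longrightarrow> D i \<inter> D j = {}"
      and rN: "\<And>j. wlnorm p w (\<lambda>\<gamma>. if \<gamma> \<in> D j then 0 else h (m j) \<gamma>) \<le> ennreal ((1/4) ^ Suc j)"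
    using glide[of h "\<lambda>j. (1/4) ^ Suc j", OF lim tail] by auto
  define f where "f j \<gamma> = (if \<gamma> \<in> D j then h (m j) \<gamma> else 0)" for j \<gamma>
  define r where "r j \<gamma> = (if \<gamma> \<in> D j then 0 else h (m j) \<gamma>)" for j \<gamma>
  have hfr: "h (m j) \<gamma> = f j \<gamma> + r j \<gamma>" for j \<gamma> unfolding f_def r_def by simp
  have hN: "wlnorm p w (h k) \<le> ennreal B" for k using U[OF evl[of k]] evn[of k] unfolding h_def by simp
  have fN: "wlnorm p w (f j) \<le> ennreal B" for j
  proof -
    have "wlnorm p w (f j) \<le> wlnorm p w (h (m j))" by (rule N_mono) (simp add: f_def)
    thus ?thesis using hN[of "m j"] by (rule order_trans)
  qed
  define \<sigma> where "\<sigma> j c = sum w {\<gamma> \<in> D j. c < \<bar>f j \<gamma>\<bar>}" for j c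
  have fset: "{\<gamma>. c < \<bar>f j \<gamma>\<bar>} = {\<gamma> \<in> D j. c < \<bar>f j \<gamma>\<bar>}" if "c > 0" for c j
    using that unfolding f_def by auto
  have wms: "wmeasure w {\<gamma>. c < \<bar>f j \<gamma>\<bar>} = ennreal (\<sigma> j c)" if "c > 0" for c j
    unfolding fset[OF that] \<sigma>_def by (rule wm_finite) (use Dfin in auto)
  have sig0: "\<sigma> j c \<ge> 0" for j c unfolding \<sigma>_def using wpos by (simp add: sum_nonneg less_imp_le)
  have F3: "\<sigma> j c \<le> (B / c) powr p" if c: "c > 0" for j c
    using N_leD[OF B0 fN c, of j] wms[OF c, of j] by (simp add: ennreal_le_iff[symmetric] del: ennreal_le_iff)
  have Xval: "(\<Sum>i\<in>S. f i \<gamma>) = f j \<gamma>" if "finite S" "j \<in> S" "\<gamma> \<in> D j" for S j \<gamma>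
  proof -
    have "(\<Sum>i\<in>S. f i \<gamma>) = f j \<gamma> + (\<Sum>i\<in>S - {j}. f i \<gamma>)" using that by (simp add: sum.remove)
    also have "(\<Sum>i\<in>S - {j}. f i \<gamma>) = 0"
    proof (rule sum.neutral, rule ballI)
      fix i assume i: "i \<in> S - {j}"
      hence "D i \<inter> D j = {}" using Ddisj[of i j] by simp
      hence "\<gamma> \<notin> D i" using that(3) by blast
      thus "f i \<gamma> = 0" unfolding f_def by simp
    qed
    finally show ?thesis by simp
  qed
  have Xzero: "(\<Sum>i\<in>S. f i \<gamma>) = 0" if "\<And>j. j \<in> S \<Longrightarrow> \<gamma> \<notin> D j" for S \<gamma>
    using that unfolding f_def by (intro sum.neutral) auto
  have Xset: "{\<gamma>. c < \<bar>\<Sum>j\<in>S. f j \<gamma>\<bar>} = (\<Union>j\<in>S. {\<gamma> \<in> D j. c < \<bar>f j \<gamma>\<bar>})" if S: "finite S" and c: "c > 0" for S c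
  proof (intro set_eqI iffI)
    fix \<gamma> assume g: "\<gamma> \<in> {\<gamma>. c < \<bar>\<Sum>j\<in>S. f j \<gamma>\<bar>}"
    show "\<gamma> \<in> (\<Union>j\<in>S. {\<gamma> \<in> D j. c < \<bar>f j \<gamma>\<bar>})"
    proof (cases "\<exists>j\<in>S. \<gamma> \<in> D j")
      case True
      then obtain j where j: "j \<in> S" "\<gamma> \<in> D j" by blast
      thus ?thesis using g Xval[OF S j] by auto
    next
      case False
      thus ?thesis using g Xzero[of S \<gamma>] c by auto
    qed
  next
    fix \<gamma> assume "\<gamma> \<in> (\<Union>j\<in>S. {\<gamma> \<in> D j. c < \<bar>f j \<gamma>\<bar>})"
    then obtain j where j: "j \<in> S" "\<gamma> \<in> D j" "c < \<bar>f j \<gamma>\<bar>" by blast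
    thus "\<gamma> \<in> {\<gamma>. c < \<bar>\<Sum>j\<in>S. f j \<gamma>\<bar>}" using Xval[OF S j(1,2)] by simp
  qed
  have wmX: "wmeasure w {\<gamma>. c < \<bar>\<Sum>j\<in>S. f j \<gamma>\<bar>} = ennreal (\<Sum>j\<in>S. \<sigma> j c)" if S: "finite S" and c: "c > 0" for S c
  proof -
    have fin: "finite (\<Union>j\<in>S. {\<gamma> \<in> D j. c < \<bar>f j \<gamma>\<bar>})" using S Dfin by auto
    have "sum w (\<Union>j\<in>S. {\<gamma> \<in> D j. c < \<bar>f j \<gamma>\<bar>}) = (\<Sum>j\<in>S. sum w {\<gamma> \<in> D j. c < \<bar>f j \<gamma>\<bar>})"
      using S Dfin Ddisj by (intro sum.UNION_disjoint) auto
    thus ?thesis unfolding Xset[OF S c] wm_finite[OF fin] \<sigma>_def by simp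
  qed
  have hsum: "(\<lambda>\<gamma>. \<Sum>j\<in>S. h (m j) \<gamma>) = T (\<lambda>n. \<Sum>k\<in>m ` S. 1 * ev k n)" if S: "finite S" for S
  proof -
    have injm: "inj_on m S" using sm strict_mono_imp_inj_on by blast
    have "T (\<lambda>n. \<Sum>k\<in>m ` S. 1 * ev k n) = (\<lambda>\<gamma>. \<Sum>k\<in>m ` S. 1 * T (ev k) \<gamma>)"
      using T_comb[OF L finite_imageI[OF S]] .
    also have "\<dots> = (\<lambda>\<gamma>. \<Sum>j\<in>S. h (m j) \<gamma>)"
      unfolding h_def by (simp add: sum.reindex[OF injm])
    finally show ?thesis by simp
  qed
  have xS_l2: "(\<lambda>n. \<Sum>k\<in>m ` S. 1 * ev k n) \<in> l2seq" if S: "finite S" for S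
    by (rule comb_l2) (use S in simp)
  have xS_norm: "l2norm (\<lambda>n. \<Sum>k\<in>m ` S. 1 * ev k n) = sqrt (card S)" if S: "finite S" for S
  proof -
    have injm: "inj_on m S" using sm strict_mono_imp_inj_on by blast
    have ev: "(\<Sum>k\<in>m ` S. 1 * ev k n) = (if n \<in> m ` S then 1 else 0)" for n
      by (rule comb_eval) (use S in simp)
    have "l2norm (\<lambda>n. \<Sum>k\<in>m ` S. 1 * ev k n) = sqrt (\<Sum>n\<in>m ` S. ((\<Sum>k\<in>m ` S. 1 * ev k n))\<^sup>2)"
      by (rule fs_norm) (use S ev in auto)
    also have "\<dots> = sqrt (card (m ` S))" using ev by simp
    also have "card (m ` S) = card S" using card_image[OF injm] .
    finally show ?thesis .
  qed
  have hup: "wlnorm p w (\<lambda>\<gamma>. \<Sum>j\<in>S. h (m j) \<gamma>) \<le> ennreal (B * sqrt (card S))" if S: "finite S" for S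
    unfolding hsum[OF S] using U[OF xS_l2[OF S]] xS_norm[OF S] by simp
  have hlo: "ennreal (A * sqrt (card S)) \<le> wlnorm p w (\<lambda>\<gamma>. \<Sum>j\<in>S. h (m j) \<gamma>)" if S: "finite S" for S
    unfolding hsum[OF S] using Lo[OF xS_l2[OF S]] xS_norm[OF S] by simp
  have RN: "wlnorm p w (\<lambda>\<gamma>. \<Sum>j\<in>S. r j \<gamma>) \<le> ennreal 1" if S: "finite S" for S
    by (rule N_sum_err[OF S]) (use rN in \<open>simp add: r_def\<close>)
  have hXR: "(\<Sum>j\<in>S. h (m j) \<gamma>) = (\<Sum>j\<in>S. f j \<gamma>) + (\<Sum>j\<in>S. r j \<gamma>)" for S \<gamma>
    by (simp add: hfr sum.distrib)
  have F1: "(\<Sum>j\<in>S. \<sigma> j c) \<le> (2 * (B * sqrt (card S) + 1) / c) powr p" if S: "finite S" and c: "c > 0" for S c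
  proof -
    have "wlnorm p w (\<lambda>\<gamma>. \<Sum>j\<in>S. f j \<gamma>) \<le> ennreal (2 * (B * sqrt (card S) + 1))"
    proof (rule N_tri[OF _ hup[OF S] RN[OF S]])
      fix \<gamma> show "\<bar>\<Sum>j\<in>S. f j \<gamma>\<bar> \<le> \<bar>\<Sum>j\<in>S. h (m j) \<gamma>\<bar> + \<bar>\<Sum>j\<in>S. r j \<gamma>\<bar>"
        unfolding hXR by linarith
    qed (use B0 in auto)
    from N_leD[OF _ this c] have "ennreal (\<Sum>j\<in>S. \<sigma> j c) \<le> ennreal ((2 * (B * sqrt (card S) + 1) / c) powr p)"
      using wmX[OF S c] B0 by simp
    thus ?thesis by (simp add: ennreal_le_iff[symmetric] del: ennreal_le_iff)
  qed
  have F2: "A * sqrt (card S) \<le> 2 * (M + 1)"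
    if S: "finite S" and M: "M \<ge> 0" and hyp: "\<And>c. c > 0 \<Longrightarrow> (\<Sum>j\<in>S. \<sigma> j c) \<le> (M / c) powr p" for S M
  proof -
    have XN: "wlnorm p w (\<lambda>\<gamma>. \<Sum>j\<in>S. f j \<gamma>) \<le> ennreal M"
    proof (rule N_leI[OF M])
      fix c :: real assume c: "c > 0"
      show "wmeasure w {\<gamma>. c < \<bar>\<Sum>j\<in>S. f j \<gamma>\<bar>} \<le> ennreal ((M / c) powr p)"
        unfolding wmX[OF S c] using hyp[OF c] by (rule ennreal_leI)
    qed
    have "wlnorm p w (\<lambda>\<gamma>. \<Sum>j\<in>S. h (m j) \<gamma>) \<le> ennreal (2 * (M + 1))"
    proof (rule N_tri[OF _ XN RN[OF S]])
      fix \<gamma> show "\<bar>\<Sum>j\<in>S. h (m j) \<gamma>\<bar> \<le> \<bar>\<Sum>j\<in>S. f j \<gamma>\<bar> + \<bar>\<Sum>j\<in>S. r j \<gamma>\<bar>"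
        unfolding hXR by linarith
    qed (use M in auto)
    with hlo[OF S] have "ennreal (A * sqrt (card S)) \<le> ennreal (2 * (M + 1))" by (rule order_trans)
    thus ?thesis using M by (simp add: ennreal_le_iff[symmetric] del: ennreal_le_iff)
  qed
  show False
  proof (cases "p > 2")
    case True
    show False by (rule p_gt2[OF True A B0 F2 F3]) auto
  next
    case False
    hence plt: "p < 2" using p2 by simp
    define Uj where "Uj j = 1 + (\<Sum>\<gamma>\<in>D j. \<bar>f j \<gamma>\<bar>)" for j
    define Wj where "Wj j = sum w (D j)" for j
    have Upos: "Uj j > 0" for j unfolding Uj_def by (simp add: add_pos_nonneg sum_nonneg)
    have zeroU: "\<sigma> j c = 0" if "Uj j \<le> c" for j c
    proof -
      have E: "{\<gamma> \<in> D j. c < \<bar>f j \<gamma>\<bar>} = {}"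
      proof (rule ccontr)
        assume "{\<gamma> \<in> D j. c < \<bar>f j \<gamma>\<bar>} \<noteq> {}"
        then obtain \<gamma> where g: "\<gamma> \<in> D j" "c < \<bar>f j \<gamma>\<bar>" by blast
        have "\<bar>f j \<gamma>\<bar> \<le> (\<Sum>\<gamma>\<in>D j. \<bar>f j \<gamma>\<bar>)" using g(1) Dfin by (intro member_le_sum) auto
        thus False using g(2) that unfolding Uj_def by linarith
      qed
      show ?thesis unfolding \<sigma>_def E by simp
    qed
    have Wb: "\<sigma> j c \<le> Wj j" for j c unfolding \<sigma>_def Wj_def
      using Dfin wpos by (intro sum_mono2) (auto simp: less_imp_le)
    have W0: "Wj j \<ge> 0" for j unfolding Wj_def using wpos by (simp add: sum_nonneg less_imp_le)
    have anti: "\<sigma> j c' \<le> \<sigma> j c" if "0 < c" "c \<le> c'" for j c c'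
      unfolding \<sigma>_def using Dfin wpos that by (intro sum_mono2) (auto simp: less_imp_le)
    show False
      by (rule p_lt2[of A B \<sigma> Uj Wj, OF plt A B0 F1 F2 F3 sig0 anti Upos zeroU Wb W0]) auto
  qed
qed

end

theorem theorem13:
  fixes w :: "'a \<Rightarrow> real" and p :: real
  assumes "\<And>\<gamma>. w \<gamma> > 0" and "1 < p" and "p \<noteq> 2"
  shows "\<not> (\<exists>T :: (nat \<Rightarrow> real) \<Rightarrow> ('a \<Rightarrow> real).
     (\<forall>x\<in>l2seq. \<forall>y\<in>l2seq. \<forall>a b. T (\<lambda>n. a * x n + b * y n) = (\<lambda>\<gamma>. a * T x \<gamma> + b * T y \<gamma>)) \<and>
     (\<forall>x\<in>l2seq. T x \<in> mpinf p w) \<and>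
     (\<exists>A B. 0 < A \<and> (\<forall>x\<in>l2seq. ennreal (A * l2norm x) \<le> wlnorm p w (T x)
                                 \<and> wlnorm p w (T x) \<le> ennreal (B * l2norm x))))"
proof
  assume "\<exists>T :: (nat \<Rightarrow> real) \<Rightarrow> ('a \<Rightarrow> real).
     (\<forall>x\<in>l2seq. \<forall>y\<in>l2seq. \<forall>a b. T (\<lambda>n. a * x n + b * y n) = (\<lambda>\<gamma>. a * T x \<gamma> + b * T y \<gamma>)) \<and>
     (\<forall>x\<in>l2seq. T x \<in> mpinf p w) \<and>
     (\<exists>A B. 0 < A \<and> (\<forall>x\<in>l2seq. ennreal (A * l2norm x) \<le> wlnorm p w (T x)
                                 \<and> wlnorm p w (T x) \<le> ennreal (B * l2norm x)))"
  then obtain T :: "(nat \<Rightarrow> real) \<Rightarrow> ('a \<Rightarrow> real)" and A B where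
    L: "\<forall>x\<in>l2seq. \<forall>y\<in>l2seq. \<forall>a b. T (\<lambda>n. a * x n + b * y n) = (\<lambda>\<gamma>. a * T x \<gamma> + b * T y \<gamma>)"
    and Mp: "\<forall>x\<in>l2seq. T x \<in> mpinf p w" and A: "0 < A"
    and AB: "\<forall>x\<in>l2seq. ennreal (A * l2norm x) \<le> wlnorm p w (T x) \<and> wlnorm p w (T x) \<le> ennreal (B * l2norm x)"
    by blast
  show False by (rule main[OF assms(1,2,3) L Mp A AB])
qed

end
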